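(* Let $X\neq\emptyset$ be a set and $\Phi$ a nonempty set of bounded functions $X\to\mathbb{R}$ that is compact with respect to $D_\Phi$. If the pseudo-metric space $(X,D_X)$ is complete, then $(X,D_X)$ is compact.
   Context: $D_\Phi(\varphi_1,\varphi_2):=\|\varphi_1-\varphi_2\|_\infty=\sup_{x\in X}|\varphi_1(x)-\varphi_2(x)|$. $D_X(x_1,x_2):=\sup_{\varphi\in\Phi}|\varphi(x_1)-\varphi(x_2)|$ (a pseudo-metric on $X$, finite since $\Phi$ is bounded); $X$ carries the topology induced by $D_X$. *)

theory Defs
  imports "HOL-Analysis.Analysis"
begin

definition DX :: "('a \<Rightarrow> real) set \<Rightarrow> 'a \<Rightarrow> 'a \<Rightarrow> real" where
  "DX \<Phi> x1 x2 = (SUP \<phi>\<in>\<Phi>. \<bar>\<phi> x1 - \<phi> x2\<bar>)"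

definition DPhi :: "'a set \<Rightarrow> ('a \<Rightarrow> real) \<Rightarrow> ('a \<Rightarrow> real) \<Rightarrow> real" where
  "DPhi X \<phi>1 \<phi>2 = (SUP x\<in>X. \<bar>\<phi>1 x - \<phi>2 x\<bar>)"

definition pm_open :: "'a set \<Rightarrow> ('a \<Rightarrow> 'a \<Rightarrow> real) \<Rightarrow> 'a set \<Rightarrow> bool" where
  "pm_open S d U \<longleftrightarrow> U \<subseteq> S \<and> (\<forall>x\<in>U. \<exists>e>0. \<forall>y\<in>S. d x y < e \<longrightarrow> y \<in> U)"

lemma istopology_pm_open: "istopology (pm_open S d)"
  unfolding istopology_def
proof (intro conjI allI impI)
  fix U V assume A1: "pm_open S d U" and A2: "pm_open S d V"
  note A = A1 A2
  show "pm_open S d (U \<inter> V)"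
    unfolding pm_open_def
  proof (intro conjI ballI)
    show "U \<inter> V \<subseteq> S" using A unfolding pm_open_def by blast
    fix x assume x: "x \<in> U \<inter> V"
    obtain e1 where "e1 > 0" "\<forall>y\<in>S. d x y < e1 \<longrightarrow> y \<in> U"
      using A x unfolding pm_open_def by blast
    moreover obtain e2 where "e2 > 0" "\<forall>y\<in>S. d x y < e2 \<longrightarrow> y \<in> V"
      using A x unfolding pm_open_def by blast
    ultimately show "\<exists>e>0. \<forall>y\<in>S. d x y < e \<longrightarrow> y \<in> U \<inter> V"
      by (intro exI[of _ "min e1 e2"]) auto
  qed
next
  fix K assume "\<forall>U\<in>K. pm_open S d U"
  then show "pm_open S d (\<Union> K)"
    unfolding pm_open_def by (meson Sup_le_iff UnionE UnionI)
qed

definition pm_topology :: "'a set \<Rightarrow> ('a \<Rightarrow> 'a \<Rightarrow> real) \<Rightarrow> 'a topology" where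
  "pm_topology S d = topology (pm_open S d)"

lemma openin_pm_topology: "openin (pm_topology S d) U \<longleftrightarrow> pm_open S d U"
  by (simp add: pm_topology_def istopology_pm_open)

definition pm_complete :: "'a set \<Rightarrow> ('a \<Rightarrow> 'a \<Rightarrow> real) \<Rightarrow> bool" where
  "pm_complete S d \<longleftrightarrow>
     (\<forall>\<sigma>::nat \<Rightarrow> 'a. range \<sigma> \<subseteq> S \<and>
        (\<forall>e>0. \<exists>N. \<forall>m n. N \<le> m \<longrightarrow> N \<le> n \<longrightarrow> d (\<sigma> m) (\<sigma> n) < e)
        \<longrightarrow> (\<exists>x\<in>S. \<forall>e>0. \<exists>N. \<forall>n\<ge>N. d (\<sigma> n) x < e))"

end

theory Submission
  imports Defs
begin

lemma topspace_pm: "topspace (pm_topology S d) = S"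
proof -
  have "pm_open S d S" unfolding pm_open_def by (auto intro: exI[of _ 1])
  moreover have "\<And>U. pm_open S d U \<Longrightarrow> U \<subseteq> S" unfolding pm_open_def by auto
  ultimately show ?thesis unfolding topspace_def openin_pm_topology by blast
qed

lemma pm_compact_net:
  assumes cpt: "compact_space (pm_topology S d)"
    and refl: "\<And>x. x \<in> S \<Longrightarrow> d x x = 0"
    and tri: "\<And>x y z. x \<in> S \<Longrightarrow> y \<in> S \<Longrightarrow> z \<in> S \<Longrightarrow> d x z \<le> d x y + d y z"
    and e: "e > 0"
  shows "\<exists>K. finite K \<and> K \<subseteq> S \<and> (\<forall>y\<in>S. \<exists>k\<in>K. d k y < e)"
proof -
  define B where "B k = {y\<in>S. d k y < e}" for k
  have op: "openin (pm_topology S d) (B k)" if "k \<in> S" for k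
    unfolding openin_pm_topology pm_open_def
  proof (intro conjI ballI)
    show "B k \<subseteq> S" unfolding B_def by auto
    fix y assume y: "y \<in> B k"
    show "\<exists>e'>0. \<forall>z\<in>S. d y z < e' \<longrightarrow> z \<in> B k"
    proof (intro exI[of _ "e - d k y"] conjI ballI impI)
      show "0 < e - d k y" using y unfolding B_def by auto
      fix z assume "z \<in> S" "d y z < e - d k y"
      then show "z \<in> B k" using tri[of k y z] y that unfolding B_def by auto
    qed
  qed
  have cov: "topspace (pm_topology S d) \<subseteq> \<Union>(B ` S)"
    using refl e unfolding topspace_pm B_def by auto
  obtain F where F: "finite F" "F \<subseteq> B ` S" "topspace (pm_topology S d) \<subseteq> \<Union>F"
    using cpt[unfolded compact_space_alt, rule_format, of "B ` S"] op cov by blast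
  obtain K where K: "K \<subseteq> S" "finite K" "F = B ` K"
    using finite_subset_image[OF F(1) F(2)] by blast
  show ?thesis
    using K F(3) unfolding topspace_pm B_def by (intro exI[of _ K]) auto
qed

lemma floor_eq_close:
  fixes a b :: real assumes "\<lfloor>a\<rfloor> = \<lfloor>b\<rfloor>" shows "\<bar>a - b\<bar> < 1"
proof -
  have "real_of_int \<lfloor>a\<rfloor> = real_of_int \<lfloor>b\<rfloor>" using assms by simp
  moreover have "real_of_int \<lfloor>a\<rfloor> \<le> a" "a < real_of_int \<lfloor>a\<rfloor> + 1" by (simp_all add: floor_correct)
  moreover have "real_of_int \<lfloor>b\<rfloor> \<le> b" "b < real_of_int \<lfloor>b\<rfloor> + 1" by (simp_all add: floor_correct)
  ultimately show ?thesis by linarith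
qed

lemma floor_bound: fixes t c :: real assumes "\<bar>t\<bar> \<le> c" shows "\<lfloor>t\<rfloor> \<in> {-(\<lceil>c\<rceil>+1)..\<lceil>c\<rceil>+1}"
proof -
  have a: "- c \<le> t" "t \<le> c" using assms by linarith+
  have "\<lfloor>t\<rfloor> \<le> \<lfloor>c\<rfloor>" using a(2) by (rule floor_mono)
  moreover have "\<lfloor>c\<rfloor> \<le> \<lceil>c\<rceil>" by (rule floor_le_ceiling)
  moreover have "\<lfloor>-c\<rfloor> \<le> \<lfloor>t\<rfloor>" using a(1) by (rule floor_mono)
  moreover have "\<lfloor>-c\<rfloor> = - \<lceil>c\<rceil>" by (simp add: ceiling_def)
  ultimately have "\<lfloor>t\<rfloor> \<le> \<lceil>c\<rceil> + 1" "-(\<lceil>c\<rceil>+1) \<le> \<lfloor>t\<rfloor>" by linarith+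
  then show ?thesis by simp
qed
lemma fin_net:
  fixes K :: "('a \<Rightarrow> real) set"
  assumes "finite K" and bnd: "\<forall>k\<in>K. \<forall>x\<in>X. \<bar>k x\<bar> \<le> B" and e: "e > 0"
  shows "\<exists>P. finite P \<and> P \<subseteq> X \<and> (\<forall>x\<in>X. \<exists>p\<in>P. \<forall>k\<in>K. \<bar>k x - k p\<bar> < e)"
proof -
  define g where "g x = restrict (\<lambda>k. \<lfloor>k x / e\<rfloor>) K" for x
  define N where "N = \<lceil>B / e\<rceil> + 1"
  have "g ` X \<subseteq> PiE K (\<lambda>_. {-N..N})"
  proof
    fix v assume "v \<in> g ` X"
    then obtain x where x: "x \<in> X" "v = g x" by auto
    have "\<lfloor>k x / e\<rfloor> \<in> {-N..N}" if "k \<in> K" for k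
    proof -
      have "\<bar>k x / e\<bar> \<le> B / e" using bnd that x e
        by (simp add: abs_divide divide_right_mono)
      then show ?thesis unfolding N_def by (rule floor_bound)
    qed
    then show "v \<in> PiE K (\<lambda>_. {-N..N})" using x unfolding g_def by auto
  qed
  moreover have "finite (PiE K (\<lambda>_. {-N..N}))" using assms(1) by (intro finite_PiE) auto
  ultimately have fin: "finite (g ` X)" by (rule finite_subset)
  define r where "r v = (SOME x. x \<in> X \<and> g x = v)" for v
  have r: "r (g x) \<in> X \<and> g (r (g x)) = g x" if "x \<in> X" for x
  proof -
    have "x \<in> X \<and> g x = g x" using that by simp
    then show ?thesis unfolding r_def by (rule someI)
  qed
  show ?thesis
  proof (intro exI[of _ "r ` g ` X"] conjI ballI)
    show "finite (r ` g ` X)" using fin by auto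
    show "r ` g ` X \<subseteq> X" using r by auto
    fix x assume x: "x \<in> X"
    show "\<exists>p\<in>r ` g ` X. \<forall>k\<in>K. \<bar>k x - k p\<bar> < e"
    proof (intro bexI[of _ "r (g x)"] ballI)
      fix k assume k: "k \<in> K"
      have "\<lfloor>k x / e\<rfloor> = \<lfloor>k (r (g x)) / e\<rfloor>"
      proof -
        have "g (r (g x)) k = g x k" using r[OF x] by simp
        then show ?thesis using k unfolding g_def by simp
      qed
      then have "\<bar>k x / e - k (r (g x)) / e\<bar> < 1" by (rule floor_eq_close)
      then have "\<bar>(k x - k (r (g x))) / e\<bar> < 1" by (simp add: diff_divide_distrib)
      then show "\<bar>k x - k (r (g x))\<bar> < e" using e by (simp add: abs_divide)
    qed (use x in auto)
  qed
qed


lemma bdd_absdiff: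
  fixes f g :: "'a \<Rightarrow> real"
  assumes "\<forall>x\<in>X. \<bar>f x\<bar> \<le> a" "\<forall>x\<in>X. \<bar>g x\<bar> \<le> b"
  shows "bdd_above ((\<lambda>x. \<bar>f x - g x\<bar>) ` X)"
proof (intro bdd_aboveI2[where M="a+b"])
  fix x assume "x \<in> X"
  then have "\<bar>f x\<bar> \<le> a" "\<bar>g x\<bar> \<le> b" using assms by auto
  then show "\<bar>f x - g x\<bar> \<le> a + b" by linarith
qed

theorem mainTheorem3:
  fixes X :: "'a set" and \<Phi> :: "('a \<Rightarrow> real) set"
  assumes "X \<noteq> {}"
    and "\<Phi> \<noteq> {}"
    and "\<forall>\<phi>\<in>\<Phi>. bounded (\<phi> ` X)"
    and "compact_space (pm_topology \<Phi> (DPhi X))"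
    and "pm_complete X (DX \<Phi>)"
  shows "compact_space (pm_topology X (DX \<Phi>))"
proof -
  note XNE = assms(1) and PNE = assms(2) and bdd = assms(3) and cpt = assms(4) and compl = assms(5)
  have bnd: "\<exists>a. \<forall>x\<in>X. \<bar>\<phi> x\<bar> \<le> a" if "\<phi> \<in> \<Phi>" for \<phi>
    using bdd that unfolding bounded_iff by auto
  have bddP: "bdd_above ((\<lambda>x. \<bar>\<phi> x - \<psi> x\<bar>) ` X)" if "\<phi> \<in> \<Phi>" "\<psi> \<in> \<Phi>" for \<phi> \<psi>
    using bnd[OF that(1)] bnd[OF that(2)] by (metis bdd_absdiff)
  have DPge: "\<bar>\<phi> x - \<psi> x\<bar> \<le> DPhi X \<phi> \<psi>" if "\<phi> \<in> \<Phi>" "\<psi> \<in> \<Phi>" "x \<in> X" for \<phi> \<psi> x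
    unfolding DPhi_def by (rule cSUP_upper[OF that(3) bddP[OF that(1,2)]])
  have DPrefl: "DPhi X \<phi> \<phi> = 0" for \<phi>
    unfolding DPhi_def using XNE by simp
  have DPtri: "DPhi X \<phi> \<rho> \<le> DPhi X \<phi> \<psi> + DPhi X \<psi> \<rho>" if "\<phi> \<in> \<Phi>" "\<psi> \<in> \<Phi>" "\<rho> \<in> \<Phi>" for \<phi> \<psi> \<rho>
    unfolding DPhi_def[of X \<phi> \<rho>]
  proof (rule cSUP_least[OF XNE])
    fix x assume x: "x \<in> X"
    have "\<bar>\<phi> x - \<rho> x\<bar> \<le> \<bar>\<phi> x - \<psi> x\<bar> + \<bar>\<psi> x - \<rho> x\<bar>" by linarith
    also have "\<dots> \<le> DPhi X \<phi> \<psi> + DPhi X \<psi> \<rho>" using DPge that x by (meson add_mono)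
    finally show "\<bar>\<phi> x - \<rho> x\<bar> \<le> DPhi X \<phi> \<psi> + DPhi X \<psi> \<rho>" .
  qed
  have net: "\<exists>K. finite K \<and> K \<subseteq> \<Phi> \<and> (\<forall>\<phi>\<in>\<Phi>. \<exists>k\<in>K. DPhi X k \<phi> < e)" if "e > 0" for e
    by (rule pm_compact_net[OF cpt DPrefl DPtri that])
  obtain K1 where K1: "finite K1" "K1 \<subseteq> \<Phi>" "\<forall>\<phi>\<in>\<Phi>. \<exists>k\<in>K1. DPhi X k \<phi> < 1"
    using net[OF zero_less_one] by blast
  have "\<forall>k\<in>K1. bounded (k ` X)" using K1(2) bdd by blast
  then have "bounded (\<Union>k\<in>K1. k ` X)" using K1(1) by (intro bounded_UN)
  then obtain a where a: "\<forall>k\<in>K1. \<forall>x\<in>X. \<bar>k x\<bar> \<le> a" unfolding bounded_iff by auto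
  define B where "B = a + 1"
  have Bnd: "\<bar>\<phi> x\<bar> \<le> B" if ph: "\<phi> \<in> \<Phi>" "x \<in> X" for \<phi> x
  proof -
    obtain k where k: "k \<in> K1" "DPhi X k \<phi> < 1" using K1 ph by auto
    have "k \<in> \<Phi>" using k(1) K1(2) by blast
    then have "\<bar>k x - \<phi> x\<bar> \<le> DPhi X k \<phi>" using DPge[of k \<phi> x] ph by simp
    moreover have "\<bar>k x\<bar> \<le> a" using a k(1) ph(2) by blast
    ultimately show ?thesis using k(2) unfolding B_def by linarith
  qed
  have bddX: "bdd_above ((\<lambda>\<phi>. \<bar>\<phi> x - \<phi> y\<bar>) ` \<Phi>)" if "x \<in> X" "y \<in> X" for x y
  proof (intro bdd_aboveI2[where M="B+B"])
    fix \<phi> assume "\<phi> \<in> \<Phi>"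
    then have "\<bar>\<phi> x\<bar> \<le> B" "\<bar>\<phi> y\<bar> \<le> B" using Bnd that by simp_all
    then show "\<bar>\<phi> x - \<phi> y\<bar> \<le> B + B" by linarith
  qed
  have DXge: "\<bar>\<phi> x - \<phi> y\<bar> \<le> DX \<Phi> x y" if "\<phi> \<in> \<Phi>" "x \<in> X" "y \<in> X" for \<phi> x y
    unfolding DX_def by (rule cSUP_upper[OF that(1) bddX[OF that(2,3)]])
  have DXrefl: "DX \<Phi> x x = 0" for x
    unfolding DX_def using PNE by simp
  have DXcomm: "DX \<Phi> x y = DX \<Phi> y x" for x y
    unfolding DX_def by (simp add: abs_minus_commute)
  have DXnn: "0 \<le> DX \<Phi> x y" if "x \<in> X" "y \<in> X" for x y
    using PNE DXge[OF _ that] by (meson abs_ge_zero all_not_in_conv order_trans)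
  have DXtri: "DX \<Phi> x z \<le> DX \<Phi> x y + DX \<Phi> y z" if "x \<in> X" "y \<in> X" "z \<in> X" for x y z
    unfolding DX_def[of \<Phi> x z]
  proof (rule cSUP_least[OF PNE])
    fix \<phi> assume p: "\<phi> \<in> \<Phi>"
    have "\<bar>\<phi> x - \<phi> z\<bar> \<le> \<bar>\<phi> x - \<phi> y\<bar> + \<bar>\<phi> y - \<phi> z\<bar>" by linarith
    also have "\<dots> \<le> DX \<Phi> x y + DX \<Phi> y z" using DXge that p by (meson add_mono)
    finally show "\<bar>\<phi> x - \<phi> z\<bar> \<le> DX \<Phi> x y + DX \<Phi> y z" .
  qed
  have tb: "\<exists>P. finite P \<and> P \<subseteq> X \<and> (\<forall>x\<in>X. \<exists>p\<in>P. DX \<Phi> p x < e)" if e: "e > 0" for e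
  proof -
    have e4: "e/4 > 0" using e by simp
    obtain K where K: "finite K" "K \<subseteq> \<Phi>" "\<forall>\<phi>\<in>\<Phi>. \<exists>k\<in>K. DPhi X k \<phi> < e/4"
      using net[OF e4] by blast
    have KB: "\<forall>k\<in>K. \<forall>x\<in>X. \<bar>k x\<bar> \<le> B" using Bnd K(2) by blast
    obtain P where P: "finite P" "P \<subseteq> X" "\<forall>x\<in>X. \<exists>p\<in>P. \<forall>k\<in>K. \<bar>k x - k p\<bar> < e/4"
      using fin_net[OF K(1) KB e4] by blast
    show ?thesis
    proof (intro exI[of _ P] conjI ballI)
      fix x assume x: "x \<in> X"
      obtain p where p: "p \<in> P" "\<forall>k\<in>K. \<bar>k x - k p\<bar> < e/4" using P x by auto
      have "DX \<Phi> p x \<le> 3 * (e/4)"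
        unfolding DX_def
      proof (rule cSUP_least[OF PNE])
        fix \<phi> assume ph: "\<phi> \<in> \<Phi>"
        obtain k where k: "k \<in> K" "DPhi X k \<phi> < e/4" using K ph by auto
        have "\<bar>k x - \<phi> x\<bar> \<le> DPhi X k \<phi>" "\<bar>k p - \<phi> p\<bar> \<le> DPhi X k \<phi>"
          using DPge[of k \<phi> x] DPge[of k \<phi> p] k K ph x p P by auto
        moreover have "\<bar>k x - k p\<bar> < e/4" using p k by auto
        ultimately show "\<bar>\<phi> p - \<phi> x\<bar> \<le> 3 * (e/4)" using k by linarith
      qed
      then show "\<exists>p\<in>P. DX \<Phi> p x < e" using p e by (intro bexI[of _ p]) auto
    qed (use P in auto)
  qed
  define F where "F x = restrict (\<lambda>\<phi>. \<phi> x) \<Phi>" for x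
  define M where "M = F ` X"
  define d where "d f g = (if f \<in> M \<and> g \<in> M then (SUP \<phi>\<in>\<Phi>. \<bar>f \<phi> - g \<phi>\<bar>) else 0)" for f g
  have dF: "d (F x) (F y) = DX \<Phi> x y" if "x \<in> X" "y \<in> X" for x y
    using that unfolding d_def M_def DX_def F_def by (auto intro: SUP_cong)
  interpret Metric_space M d
  proof
    fix f g
    show "0 \<le> d f g"
    proof (cases "f \<in> M \<and> g \<in> M")
      case True
      then obtain x y where "x \<in> X" "y \<in> X" "f = F x" "g = F y" unfolding M_def by auto
      then show ?thesis using dF DXnn by simp
    next
      case False
      then show ?thesis unfolding d_def by auto
    qed
    show "d f g = d g f" unfolding d_def by (simp add: abs_minus_commute conj_commute)
  next
    fix f g assume fg: "f \<in> M" "g \<in> M"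
    then obtain x y where xy: "x \<in> X" "y \<in> X" "f = F x" "g = F y" unfolding M_def by auto
    show "d f g = 0 \<longleftrightarrow> f = g"
    proof
      assume "d f g = 0"
      then have D0: "DX \<Phi> x y = 0" using dF[OF xy(1,2)] xy(3,4) by simp
      have "\<phi> x = \<phi> y" if "\<phi> \<in> \<Phi>" for \<phi>
        using DXge[OF that xy(1,2)] D0 by simp
      then show "f = g" unfolding xy F_def by (intro restrict_ext) simp
    next
      assume "f = g"
      then show "d f g = 0" using dF[OF xy(1,1)] DXrefl xy by simp
    qed
  next
    fix f g h assume "f \<in> M" "g \<in> M" "h \<in> M"
    then obtain x y z where "x \<in> X" "y \<in> X" "z \<in> X" "f = F x" "g = F y" "h = F z" unfolding M_def by auto
    then show "d f h \<le> d f g + d g h" using dF DXtri by simp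
  qed
  have "mtotally_bounded M"
    unfolding mtotally_bounded_def
  proof (intro allI impI)
    fix e :: real assume e: "e > 0"
    obtain P where P: "finite P" "P \<subseteq> X" "\<forall>x\<in>X. \<exists>p\<in>P. DX \<Phi> p x < e" using tb[OF e] by auto
    show "\<exists>K. finite K \<and> K \<subseteq> M \<and> M \<subseteq> (\<Union>x\<in>K. mball x e)"
    proof (intro exI[of _ "F ` P"] conjI)
      show "M \<subseteq> (\<Union>x\<in>F ` P. mball x e)"
      proof
        fix f assume "f \<in> M"
        then obtain x where x: "x \<in> X" "f = F x" unfolding M_def by auto
        then obtain p where p: "p \<in> P" "DX \<Phi> p x < e" using P by auto
        then have pX: "p \<in> X" using P by auto
        have "F x \<in> mball (F p) e" unfolding mball_def using dF[OF pX x(1)] p pX x unfolding M_def by auto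
        then show "f \<in> (\<Union>x\<in>F ` P. mball x e)" using p x by auto
      qed
    qed (use P in \<open>auto simp: M_def\<close>)
  qed
  moreover have "mcomplete"
    unfolding mcomplete_def
  proof (intro allI impI)
    fix \<sigma> assume C: "MCauchy \<sigma>"
    define \<tau> where "\<tau> n = (SOME x. x \<in> X \<and> F x = \<sigma> n)" for n
    have \<tau>: "\<tau> n \<in> X \<and> F (\<tau> n) = \<sigma> n" for n
    proof -
      have "\<sigma> n \<in> M" using C unfolding MCauchy_def by auto
      then obtain x where "x \<in> X" "F x = \<sigma> n" unfolding M_def by auto
      then have "x \<in> X \<and> F x = \<sigma> n" by simp
      then show ?thesis unfolding \<tau>_def by (rule someI)
    qed
    have "range \<tau> \<subseteq> X \<and> (\<forall>e>0. \<exists>N. \<forall>m n. N \<le> m \<longrightarrow> N \<le> n \<longrightarrow> DX \<Phi> (\<tau> m) (\<tau> n) < e)"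
    proof (intro conjI allI impI)
      show "range \<tau> \<subseteq> X" using \<tau> by auto
      fix e :: real assume "e > 0"
      then obtain N where N: "\<forall>m n. N \<le> m \<longrightarrow> N \<le> n \<longrightarrow> d (\<sigma> m) (\<sigma> n) < e"
        using C unfolding MCauchy_def by blast
      have "DX \<Phi> (\<tau> m) (\<tau> n) = d (\<sigma> m) (\<sigma> n)" for m n
        using dF[of "\<tau> m" "\<tau> n"] \<tau>[of m] \<tau>[of n] by simp
      then show "\<exists>N. \<forall>m n. N \<le> m \<longrightarrow> N \<le> n \<longrightarrow> DX \<Phi> (\<tau> m) (\<tau> n) < e"
        using N by auto
    qed
    then have "\<exists>x\<in>X. \<forall>e>0. \<exists>N. \<forall>n\<ge>N. DX \<Phi> (\<tau> n) x < e"
      by (rule mp[OF spec[OF compl[unfolded pm_complete_def], of \<tau>]])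
    then obtain x where x: "x \<in> X" "\<forall>e>0. \<exists>N. \<forall>n\<ge>N. DX \<Phi> (\<tau> n) x < e"
      by blast
    have "limitin mtopology \<sigma> (F x) sequentially"
      unfolding limitin_metric eventually_sequentially
    proof (intro conjI allI impI)
      show "F x \<in> M" using x unfolding M_def by auto
      fix e :: real assume "e > 0"
      then obtain N where "\<forall>n\<ge>N. DX \<Phi> (\<tau> n) x < e" using x by auto
      moreover have "\<sigma> n \<in> M \<and> d (\<sigma> n) (F x) = DX \<Phi> (\<tau> n) x" for n
        using dF[of "\<tau> n" x] \<tau>[of n] x unfolding M_def by (metis image_eqI)
      ultimately show "\<exists>N. \<forall>n\<ge>N. \<sigma> n \<in> M \<and> d (\<sigma> n) (F x) < e" by auto
    qed
    then show "\<exists>l. limitin mtopology \<sigma> l sequentially" by blast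
  qed
  ultimately have cM: "compact_space mtopology" using compact_space_eq_mcomplete_mtotally_bounded by blast
  show ?thesis
    unfolding compact_space_alt topspace_pm
  proof (intro allI impI)
    fix U assume U: "(\<forall>u\<in>U. openin (pm_topology X (DX \<Phi>)) u) \<and> X \<subseteq> \<Union> U"
    have sat: "x \<in> u" if h: "u \<in> U" "y \<in> u" "x \<in> X" "F x = F y" for u x y
    proof -
      have o: "pm_open X (DX \<Phi>) u" using U h(1) openin_pm_topology by blast
      then have y: "y \<in> X" using h(2) unfolding pm_open_def by auto
      obtain e where "e > 0" "\<forall>z\<in>X. DX \<Phi> y z < e \<longrightarrow> z \<in> u" using o h(2) unfolding pm_open_def by blast
      moreover have "DX \<Phi> y x = 0"
      proof -
        have "DX \<Phi> y x = d (F y) (F x)" using dF[OF y h(3)] by simp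
        also have "\<dots> = d (F y) (F y)" using h(4) by simp
        also have "\<dots> = 0" using dF[OF y y] DXrefl by simp
        finally show ?thesis .
      qed
      ultimately show ?thesis using h(3) by auto
    qed
    have opM: "openin mtopology (F ` u)" if "u \<in> U" for u
      unfolding openin_mtopology
    proof (intro conjI allI impI)
      have o: "pm_open X (DX \<Phi>) u" using U \<open>u \<in> U\<close> openin_pm_topology by blast
      then show "F ` u \<subseteq> M" unfolding pm_open_def M_def by auto
      fix f assume "f \<in> F ` u"
      then obtain y where y: "y \<in> u" "f = F y" by auto
      then have yX: "y \<in> X" using o unfolding pm_open_def by auto
      obtain e where e: "e > 0" "\<forall>z\<in>X. DX \<Phi> y z < e \<longrightarrow> z \<in> u" using o y unfolding pm_open_def by blast
      show "\<exists>r>0. mball f r \<subseteq> F ` u"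
      proof (intro exI[of _ e] conjI subsetI)
        fix g assume "g \<in> mball f e"
        then have gm: "g \<in> M" "d f g < e" by (auto simp: mball_def)
        then obtain z where z: "z \<in> X" "g = F z" unfolding M_def by auto
        then show "g \<in> F ` u" using e dF[OF yX z(1)] y gm by auto
      qed (use e in auto)
    qed
    have cov: "topspace mtopology \<subseteq> \<Union> ((\<lambda>u. F ` u) ` U)"
    proof
      fix f assume "f \<in> topspace mtopology"
      then have "f \<in> M" by simp
      then obtain x where x: "x \<in> X" "f = F x" unfolding M_def by auto
      then obtain u where "u \<in> U" "x \<in> u" using U by auto
      then show "f \<in> \<Union> ((\<lambda>u. F ` u) ` U)" using x by auto
    qed
    have opM': "\<forall>w\<in>(\<lambda>u. F ` u) ` U. openin mtopology w" using opM by blast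
    obtain G where G: "finite G" "G \<subseteq> (\<lambda>u. F ` u) ` U" "topspace mtopology \<subseteq> \<Union> G"
      using cM[unfolded compact_space_alt] opM' cov by meson
    obtain V where V: "V \<subseteq> U" "finite V" "G = (\<lambda>u. F ` u) ` V"
      using finite_subset_image[OF G(1) G(2)] by blast
    show "\<exists>\<F>. finite \<F> \<and> \<F> \<subseteq> U \<and> X \<subseteq> \<Union> \<F>"
    proof (intro exI[of _ V] conjI subsetI)
      fix x assume x: "x \<in> X"
      then have "F x \<in> M" unfolding M_def by auto
      then have "F x \<in> \<Union> G" using G(3) by auto
      then obtain u y where uy: "u \<in> V" "y \<in> u" "F x = F y" using V(3) by auto
      have "u \<in> U" using uy(1) V(1) by auto
      then have "x \<in> u" using sat[of u y x] uy x by simp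
      then show "x \<in> \<Union> V" using uy(1) by auto
    qed (use V in auto)
  qed
qed

end
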